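(* Under Yalcin's semantics, the following formulas are valid for all formulas $\varphi,\alpha,\beta$ of $\mathcal{L}(\Rightarrow)$ and every nonmodal formula $\pi$: A1: $(\varphi\Rightarrow\pi)\leftrightarrow\Box(\varphi\to\pi)$; A2: $(\varphi\Rightarrow(\alpha\wedge\beta))\leftrightarrow((\varphi\Rightarrow\alpha)\wedge(\varphi\Rightarrow\beta))$; A3: $(\varphi\Rightarrow(\alpha\vee\Box\beta))\leftrightarrow((\varphi\Rightarrow\alpha)\vee(\varphi\Rightarrow\beta))$; A4: $(\varphi\Rightarrow(\alpha\vee\Diamond\beta))\leftrightarrow((\varphi\Rightarrow\alpha)\vee\neg(\varphi\Rightarrow\neg\beta))$.
   Context: The language $\mathcal{L}(\Rightarrow)$ is given by $\varphi::= p\mid \neg\varphi\mid (\varphi\wedge\varphi)\mid \Box\varphi \mid (\varphi\Rightarrow\varphi)$, with $p$ ranging over a fixed set of propositional variables; $\vee,\to,\leftrightarrow,\bot$ as usual and $\Diamond\varphi:=\neg\Box\neg\varphi$. A formula is nonmodal if it contains neither $\Rightarrow$ nor $\Box$. A model is $\mathcal{M}=\langle W,V\rangle$ with $W$ nonempty and $V$ assigning each propositional variable a subset of $W$. Yalcin's semantics: for $w\in W$, $X\subseteq W$: $\mathcal{M},w,X\vDash p$ iff $w\in V(p)$; $\neg,\wedge$ Boolean; $\mathcal{M},w,X\vDash\Box\varphi$ iff $\mathcal{M},v,X\vDash\varphi$ for all $v\in X$; $\mathcal{M},w,X\vDash\varphi\Rightarrow\psi$ iff $\mathcal{M},w,\llbracket\varphi\rrbracket^{\mathcal{M},X}\vDash\Box\psi$,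 where $\llbracket\varphi\rrbracket^{\mathcal{M},X}=\{v\in X\mid\mathcal{M},v,X\vDash\varphi\}$. A formula is valid iff it is true at every $w\in W$ relative to every $X\subseteq W$ in every model. *)

theory Defs
  imports Main
begin

datatype 'p fm =
    Var 'p
  | Neg "'p fm"
  | Conj "'p fm" "'p fm"
  | Box "'p fm"
  | Imp "'p fm" "'p fm"   (* the indicative conditional \<Rightarrow> *)

definition Disj :: "'p fm \<Rightarrow> 'p fm \<Rightarrow> 'p fm" where
  "Disj a b = Neg (Conj (Neg a) (Neg b))"
definition Impl :: "'p fm \<Rightarrow> 'p fm \<Rightarrow> 'p fm" where
  "Impl a b = Neg (Conj a (Neg b))"
definition Iff :: "'p fm \<Rightarrow> 'p fm \<Rightarrow> 'p fm" where
  "Iff a b = Conj (Impl a b) (Impl b a)"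
definition Dia :: "'p fm \<Rightarrow> 'p fm" where
  "Dia a = Neg (Box (Neg a))"

fun nonmodal :: "'p fm \<Rightarrow> bool" where
  "nonmodal (Var p) = True"
| "nonmodal (Neg a) = nonmodal a"
| "nonmodal (Conj a b) = (nonmodal a \<and> nonmodal b)"
| "nonmodal (Box a) = False"
| "nonmodal (Imp a b) = False"

fun sat :: "'w set \<Rightarrow> ('p \<Rightarrow> 'w set) \<Rightarrow> 'w \<Rightarrow> 'w set \<Rightarrow> 'p fm \<Rightarrow> bool" where
  "sat W V w X (Var p) = (w \<in> V p)"
| "sat W V w X (Neg a) = (\<not> sat W V w X a)"
| "sat W V w X (Conj a b) = (sat W V w X a \<and> sat W V w X b)"
| "sat W V w X (Box a) = (\<forall>v\<in>X. sat W V v X a)"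
| "sat W V w X (Imp a b) =
     (let Y = {v \<in> X. sat W V v X a} in \<forall>v\<in>Y. sat W V v Y b)"

definition is_model :: "'w set \<Rightarrow> ('p \<Rightarrow> 'w set) \<Rightarrow> bool" where
  "is_model W V \<longleftrightarrow> W \<noteq> {} \<and> (\<forall>p. V p \<subseteq> W)"

definition valid :: "'w itself \<Rightarrow> 'p fm \<Rightarrow> bool" where
  "valid _ phi \<longleftrightarrow> (\<forall>(W::'w set) V w X. is_model W V \<and> w \<in> W \<and> X \<subseteq> W \<longrightarrow> sat W V w X phi)"

end

theory Submission
  imports Defs
begin

lemma nonmodal_indep: "nonmodal p \<Longrightarrow> sat W V w X p = sat W V w Y p"
  by (induction p) auto

theorem lemma3:
  fixes \<phi> \<alpha> \<beta> \<pi> :: "'p fm"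
  assumes "nonmodal \<pi>"
  shows "valid TYPE('w) (Iff (Imp \<phi> \<pi>) (Box (Impl \<phi> \<pi>)))
       \<and> valid TYPE('w) (Iff (Imp \<phi> (Conj \<alpha> \<beta>)) (Conj (Imp \<phi> \<alpha>) (Imp \<phi> \<beta>)))
       \<and> valid TYPE('w) (Iff (Imp \<phi> (Disj \<alpha> (Box \<beta>))) (Disj (Imp \<phi> \<alpha>) (Imp \<phi> \<beta>)))
       \<and> valid TYPE('w) (Iff (Imp \<phi> (Disj \<alpha> (Dia \<beta>))) (Disj (Imp \<phi> \<alpha>) (Neg (Imp \<phi> (Neg \<beta>)))))"
proof (intro conjI)
  show "valid TYPE('w) (Iff (Imp \<phi> \<pi>) (Box (Impl \<phi> \<pi>)))"
    unfolding valid_def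
  proof (intro allI impI)
    fix W :: "'w set" and V w X
    let ?Y = "{v \<in> X. sat W V v X \<phi>}"
    have e: "\<And>v. sat W V v ?Y \<pi> = sat W V v X \<pi>" by (rule nonmodal_indep[OF assms])
    have "sat W V w X (Imp \<phi> \<pi>) = (\<forall>v\<in>X. sat W V v X \<phi> \<longrightarrow> sat W V v X \<pi>)"
      using e by (simp add: Let_def) blast
    moreover have "sat W V w X (Box (Impl \<phi> \<pi>)) = (\<forall>v\<in>X. sat W V v X \<phi> \<longrightarrow> sat W V v X \<pi>)"
      by (simp add: Impl_def)
    ultimately show "sat W V w X (Iff (Imp \<phi> \<pi>) (Box (Impl \<phi> \<pi>)))"
      unfolding Iff_def Impl_def sat.simps by blast
  qed
  show "valid TYPE('w) (Iff (Imp \<phi> (Conj \<alpha> \<beta>)) (Conj (Imp \<phi> \<alpha>) (Imp \<phi> \<beta>)))"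
    unfolding valid_def Iff_def Impl_def by (simp add: Let_def) fast
  show "valid TYPE('w) (Iff (Imp \<phi> (Disj \<alpha> (Box \<beta>))) (Disj (Imp \<phi> \<alpha>) (Imp \<phi> \<beta>)))"
    unfolding valid_def Iff_def Impl_def Disj_def by (simp add: Let_def) fast
  show "valid TYPE('w) (Iff (Imp \<phi> (Disj \<alpha> (Dia \<beta>))) (Disj (Imp \<phi> \<alpha>) (Neg (Imp \<phi> (Neg \<beta>)))))"
    unfolding valid_def Iff_def Impl_def Disj_def Dia_def by (simp add: Let_def) fast
qed

end
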